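(* Let $\Lambda\subset\mathbb{R}^d$ be a full-rank lattice and $P=\Lambda\cap[0,1)^d$, and assume $|P|\ge 2$. Then $q(P)\ge q(\Lambda)$ and \[ h(P)\le \begin{cases} 2\sqrt{d}\, h(\Lambda) & \text{if } h(\Lambda)\ge 1/2,\\ (1+\sqrt{d})\,h(\Lambda) & \text{otherwise.}\end{cases} \] Consequently, \[ \rho(P)\le \begin{cases} 2\sqrt{d}\, \rho(\Lambda) & \text{if } h(\Lambda)\ge 1/2,\\ (1+\sqrt{d})\,\rho(\Lambda) & \text{otherwise.}\end{cases} \]
   Context: For a finite point set $P\subset[0,1]^d$ with at least two points: covering radius $h(P)=\sup_{x\in[0,1]^d}\min_{y\in P}\|x-y\|_2$, separation radius $q(P)=\frac12\min_{x,y\in P,\,x\ne y}\|x-y\|_2$, mesh ratio $\rho(P)=h(P)/q(P)$. For a full-rank lattice $\Lambda\subset\mathbb{R}^d$: $h(\Lambda)=\sup_{x\in\mathbb{R}^d}\min_{y\in\Lambda}\|x-y\|_2$, $q(\Lambda)=\frac12\min_{x\in\Lambda\setminus\{0\}}\|x\|_2$, $\rho(\Lambda)=h(\Lambda)/q(\Lambda)$. *)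

theory Defs
  imports "HOL-Analysis.Analysis"
begin

definition lattice_of :: "real^'d^'d \<Rightarrow> (real^'d) set" where
  "lattice_of B = {B *v (\<chi> i. real_of_int (z $ i)) | z :: int^'d. True}"

definition full_rank_lattice :: "(real^'d) set \<Rightarrow> bool" where
  "full_rank_lattice L \<longleftrightarrow> (\<exists>B. invertible B \<and> L = lattice_of B)"

definition unit_cube :: "(real^'d) set" where
  "unit_cube = {x. \<forall>i. 0 \<le> x $ i \<and> x $ i \<le> 1}"

definition half_open_cube :: "(real^'d) set" where
  "half_open_cube = {x. \<forall>i. 0 \<le> x $ i \<and> x $ i < 1}"

definition cover_rad :: "(real^'d) set \<Rightarrow> real" where
  "cover_rad P = (SUP x\<in>unit_cube. Min ((\<lambda>y. dist x y) ` P))"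

definition sep_rad :: "(real^'d) set \<Rightarrow> real" where
  "sep_rad P = Min {dist x y | x y. x \<in> P \<and> y \<in> P \<and> x \<noteq> y} / 2"

definition mesh_ratio :: "(real^'d) set \<Rightarrow> real" where
  "mesh_ratio P = cover_rad P / sep_rad P"

text \<open>Covering radius, separation radius and mesh ratio of a lattice
  (the minima are attained; written as infima).\<close>

definition lat_cover_rad :: "(real^'d) set \<Rightarrow> real" where
  "lat_cover_rad L = (SUP x\<in>UNIV. INF y\<in>L. dist x y)"

definition lat_sep_rad :: "(real^'d) set \<Rightarrow> real" where
  "lat_sep_rad L = (INF x\<in>L - {0}. norm x) / 2"

definition lat_mesh_ratio :: "(real^'d) set \<Rightarrow> real" where
  "lat_mesh_ratio L = lat_cover_rad L / lat_sep_rad L"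

end

theory Submission
  imports Defs
begin

lemma norm_le_sqrt_card:
  fixes v :: "real^'d"
  assumes "\<And>i. \<bar>v$i\<bar> \<le> c"
  shows "norm v \<le> sqrt (real CARD('d)) * c"
proof -
  have c0: "0 \<le> c" using assms[of undefined] by simp
  have "(\<Sum>i\<in>UNIV. (v$i)^2) \<le> (\<Sum>i\<in>(UNIV::'d set). c^2)"
    by (rule sum_mono) (metis abs_le_square_iff abs_of_nonneg assms c0)
  hence "(\<Sum>i\<in>UNIV. (v$i)^2) \<le> real CARD('d) * c^2" by simp
  hence "sqrt (\<Sum>i\<in>UNIV. (v$i)^2) \<le> sqrt (real CARD('d) * c^2)" by (rule real_sqrt_le_mono)
  thus ?thesis using c0 by (simp add: norm_vec_def L2_set_def real_sqrt_mult)
qed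

lemma lat_diff:
  assumes "x \<in> lattice_of B" "y \<in> lattice_of B"
  shows "x - y \<in> lattice_of B"
proof -
  obtain z1 where z1: "x = B *v (\<chi> i. real_of_int (z1 $ i))" using assms(1) unfolding lattice_of_def by auto
  obtain z2 where z2: "y = B *v (\<chi> i. real_of_int (z2 $ i))" using assms(2) unfolding lattice_of_def by auto
  have "(\<chi> i. real_of_int (z1 $ i)) - (\<chi> i. real_of_int (z2 $ i)) = (\<chi> i. real_of_int ((z1 - z2) $ i))"
    by (simp add: vec_eq_iff)
  hence "x - y = B *v (\<chi> i. real_of_int ((z1 - z2) $ i))"
    by (metis z1 z2 matrix_vector_mult_diff_distrib)
  thus ?thesis unfolding lattice_of_def by blast
qed

lemma lat_cover_bound:
  fixes B :: "real^'d^'d"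
  assumes "invertible B"
  shows "\<exists>R. \<forall>x. \<exists>y\<in>lattice_of B. dist x y \<le> R"
proof -
  obtain A where A: "B ** A = mat 1" "A ** B = mat 1" using assms unfolding invertible_def by auto
  obtain K where K: "\<forall>v. norm (B *v v) \<le> norm v * K"
    using bounded_linear.pos_bounded[OF matrix_vector_mul_bounded_linear[of B]] by auto
  show ?thesis
  proof (intro exI allI)
    fix x :: "real^'d"
    define t where "t = A *v x"
    define w where "w = (\<chi> i. real_of_int (floor (t$i)))"
    have bx: "B *v t = x" unfolding t_def by (simp add: matrix_vector_mul_assoc A)
    have "w = (\<chi> i. real_of_int ((\<chi> j. floor (t$j)) $ i))" unfolding w_def by simp
    hence yin: "B *v w \<in> lattice_of B" unfolding lattice_of_def by blast
    have "\<And>i. \<bar>(t - w)$i\<bar> \<le> 1" unfolding w_def by (simp; linarith)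
    hence n: "norm (t - w) \<le> sqrt (real CARD('d)) * 1" by (rule norm_le_sqrt_card)
    have "dist x (B *v w) = norm (B *v (t - w))" using bx by (simp add: dist_norm matrix_vector_mult_diff_distrib)
    also have "\<dots> \<le> norm (t - w) * K" using K by blast
    also have "\<dots> \<le> norm (t - w) * \<bar>K\<bar>" by (simp add: mult_left_mono)
    also have "\<dots> \<le> sqrt (real CARD('d)) * \<bar>K\<bar>" using n by (simp add: mult_right_mono)
    finally show "\<exists>y\<in>lattice_of B. dist x y \<le> sqrt (real CARD('d)) * \<bar>K\<bar>" using yin by blast
  qed
qed

lemma lat_sep_bound:
  fixes B :: "real^'d^'d"
  assumes "invertible B"
  shows "\<exists>c>0. \<forall>v\<in>lattice_of B - {0}. c \<le> norm v"
proof -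
  obtain A where A: "B ** A = mat 1" "A ** B = mat 1" using assms unfolding invertible_def by auto
  obtain K where K: "K > 0" "\<forall>v. norm (A *v v) \<le> norm v * K"
    using bounded_linear.pos_bounded[OF matrix_vector_mul_bounded_linear[of A]] by auto
  show ?thesis
  proof (intro exI conjI ballI)
    show "0 < 1 / K" using K by simp
    fix v assume v: "v \<in> lattice_of B - {0}"
    then obtain z where z: "v = B *v (\<chi> i. real_of_int (z $ i))" unfolding lattice_of_def by auto
    define w where "w = (\<chi> i. real_of_int (z $ i))"
    have "A *v v = w" unfolding z w_def by (simp add: matrix_vector_mul_assoc A)
    have "w \<noteq> 0" using v z w_def by auto
    then obtain i where "w $ i \<noteq> 0" by (auto simp: vec_eq_iff)
    hence "z $ i \<noteq> 0" unfolding w_def by simp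
    hence "1 \<le> \<bar>w $ i\<bar>" unfolding w_def by simp
    also have "\<dots> \<le> norm w" by (rule component_le_norm_cart)
    also have "\<dots> \<le> norm v * K" using K \<open>A *v v = w\<close> by metis
    finally show "1 / K \<le> norm v" using K by (simp add: field_simps)
  qed
qed


theorem mainTheorem3:
  fixes L :: "(real^'d) set" and P :: "(real^'d) set"
  assumes "full_rank_lattice L"
    and "P = L \<inter> half_open_cube"
    and "card P \<ge> 2"
  shows "sep_rad P \<ge> lat_sep_rad L
    \<and> cover_rad P \<le> (if lat_cover_rad L \<ge> 1/2
                       then 2 * sqrt (real CARD('d)) * lat_cover_rad L
                       else (1 + sqrt (real CARD('d))) * lat_cover_rad L)
    \<and> mesh_ratio P \<le> (if lat_cover_rad L \<ge> 1/2
                       then 2 * sqrt (real CARD('d)) * lat_mesh_ratio L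
                       else (1 + sqrt (real CARD('d))) * lat_mesh_ratio L)"
proof -
  obtain B :: "real^'d^'d" where B: "invertible B" "L = lattice_of B"
    using assms(1) unfolding full_rank_lattice_def by auto
  obtain R where R: "\<And>x. \<exists>y\<in>L. dist x y \<le> R" using lat_cover_bound[OF B(1)] B(2) by auto
  obtain c where c: "c > 0" "\<And>v. v \<in> L - {0} \<Longrightarrow> c \<le> norm v" using lat_sep_bound[OF B(1)] B(2) by auto
  have finP: "finite P" using assms(3) card.infinite by fastforce
  have PL: "P \<subseteq> L" and Pc: "P \<subseteq> half_open_cube" using assms(2) by auto
  have "\<not> card P \<le> Suc 0" using assms(3) by simp
  then obtain p1 p2 where p12: "p1 \<in> P" "p2 \<in> P" "p1 \<noteq> p2"
    using card_le_Suc0_iff_eq[OF finP] by blast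
  have Lne: "L \<noteq> {}" using p12 PL by auto
  have bb: "\<And>x. bdd_below ((\<lambda>y. dist x y) ` L)" by (rule bdd_belowI[of _ 0]) auto
  define f where "f x = (INF y\<in>L. dist x y)" for x
  have f0: "0 \<le> f x" for x unfolding f_def by (rule cINF_greatest[OF Lne]) auto
  have fR: "f x \<le> R" for x
  proof -
    obtain y where "y \<in> L" "dist x y \<le> R" using R by blast
    thus ?thesis unfolding f_def by (meson bb cINF_lower order_trans)
  qed
  have ba: "bdd_above (range f)" by (rule bdd_aboveI[of _ R]) (auto simp: fR)
  define h where "h = lat_cover_rad L"
  have hdef: "h = (SUP x\<in>UNIV. f x)" unfolding h_def lat_cover_rad_def f_def by simp
  have fh: "f x \<le> h" for x unfolding hdef by (rule cSUP_upper[OF _ ba]) auto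
  have h0: "0 \<le> h" using f0 fh order_trans by blast
  have near: "\<exists>y\<in>L. dist x y < h + d" if "d > 0" for x d
  proof -
    have "f x < h + d" using fh[of x] that by linarith
    thus ?thesis unfolding f_def using cINF_less_iff[OF Lne bb] by blast
  qed
  define S where "S = L - {0}"
  have Sne: "S \<noteq> {}" using p12 PL unfolding S_def by blast
  have bS: "bdd_below (norm ` S)" by (rule bdd_belowI[of _ 0]) auto
  have infS: "c \<le> (INF v\<in>S. norm v)" by (rule cINF_greatest[OF Sne]) (auto simp: S_def c)
  have qL: "lat_sep_rad L = (INF v\<in>S. norm v) / 2" unfolding lat_sep_rad_def S_def by simp
  have qLpos: "lat_sep_rad L > 0" using qL infS c by simp
  define D where "D = {dist x y | x y. x \<in> P \<and> y \<in> P \<and> x \<noteq> y}"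
  have finD: "finite D"
  proof -
    have "D \<subseteq> (\<lambda>(x,y). dist x y) ` (P \<times> P)" unfolding D_def by auto
    thus ?thesis using finP finite_subset by blast
  qed
  have Dne: "D \<noteq> {}" using p12 unfolding D_def by blast
  have "(INF v\<in>S. norm v) \<le> Min D"
  proof (subst Min_ge_iff[OF finD Dne], intro ballI)
    fix a assume "a \<in> D"
    then obtain x y where xy: "a = dist x y" "x \<in> P" "y \<in> P" "x \<noteq> y" unfolding D_def by auto
    have "x \<in> lattice_of B" "y \<in> lattice_of B" using xy PL B(2) by auto
    hence "x - y \<in> lattice_of B" by (rule lat_diff)
    hence "x - y \<in> S" using xy B(2) unfolding S_def by auto
    hence "(INF v\<in>S. norm v) \<le> norm (x - y)" by (rule cINF_lower[OF bS])
    thus "(INF v\<in>S. norm v) \<le> a" using xy by (simp add: dist_norm)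
  qed
  hence sep: "lat_sep_rad L \<le> sep_rad P" unfolding sep_rad_def qL D_def[symmetric] by simp
  have cube_ne: "(unit_cube::(real^'d) set) \<noteq> {}" unfolding unit_cube_def by (auto intro: exI[of _ 0])
  have cov: "cover_rad P \<le> M" if H: "\<And>x::real^'d. x \<in> unit_cube \<Longrightarrow> \<exists>y\<in>P. dist x y \<le> M" for M
    unfolding cover_rad_def
  proof (rule cSUP_least[OF cube_ne])
    fix x :: "real^'d" assume "x \<in> unit_cube"
    then obtain y where "y \<in> P" "dist x y \<le> M" using H by blast
    thus "Min ((\<lambda>y. dist x y) ` P) \<le> M" using finP by (meson Min_le finite_imageI image_eqI order_trans)
  qed
  define sd where "sd = sqrt (real CARD('d))"
  have sd1: "1 \<le> sd" unfolding sd_def by simp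
  have covb: "cover_rad P \<le> (if h \<ge> 1/2 then 2 * sd * h else (1 + sd) * h)"
  proof (cases "h \<ge> 1/2")
    case True
    have "cover_rad P \<le> sd"
    proof (rule cov)
      fix x :: "real^'d" assume x: "x \<in> unit_cube"
      have "\<bar>(x - p1)$i\<bar> \<le> 1" for i
      proof -
        have "0 \<le> x$i" "x$i \<le> 1" using x unfolding unit_cube_def by auto
        moreover have "0 \<le> p1$i" "p1$i < 1" using p12(1) Pc unfolding half_open_cube_def by auto
        ultimately show ?thesis by simp
      qed
      hence "norm (x - p1) \<le> sd * 1" unfolding sd_def by (rule norm_le_sqrt_card)
      thus "\<exists>y\<in>P. dist x y \<le> sd" using p12(1) by (auto simp: dist_norm)
    qed
    also have "sd \<le> 2 * sd * h" using True sd1 mult_left_mono[of 1 "2 * h" sd] by (simp add: algebra_simps)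
    finally show ?thesis using True by simp
  next
    case False
    have "cover_rad P \<le> (1 + sd) * h"
    proof (rule field_le_epsilon)
      fix e :: real assume e: "0 < e"
      define ep where "ep = min (e / (2 * sd + 2)) ((1/2 - h)/2)"
      have ep0: "0 < ep" unfolding ep_def using e False sd1 by simp
      have ep1: "ep \<le> e / (2 * sd + 2)" "ep \<le> (1/2 - h)/2" unfolding ep_def by (rule min.cobounded1, rule min.cobounded2)
      show "cover_rad P \<le> (1 + sd) * h + e"
      proof (rule cov)
        fix x :: "real^'d" assume x: "x \<in> unit_cube"
        define x' where "x' = (\<chi> i. max (h + ep) (min (1 - h - ep) (x$i)))"
        obtain y where y: "y \<in> L" "dist x' y < h + ep/2" using near[of "ep/2" x'] ep0 by auto
        have yc: "\<bar>x'$i - y$i\<bar> < h + ep/2" for i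
          using component_le_norm_cart[of "x' - y" i] y(2) by (simp add: dist_norm)
        have "y \<in> half_open_cube" unfolding half_open_cube_def
        proof (intro CollectI allI conjI)
          fix i
          have "h + ep \<le> x'$i" "x'$i \<le> 1 - h - ep" unfolding x'_def using ep1 False h0 by auto
          thus "0 \<le> y$i" "y$i < 1" using yc[of i] ep0 h0 by (auto simp: abs_less_iff)
        qed
        hence yP: "y \<in> P" using y(1) assms(2) by simp
        have "\<bar>(x - x')$i\<bar> \<le> h + ep" for i
        proof -
          have "0 \<le> x$i" "x$i \<le> 1" using x unfolding unit_cube_def by auto
          thus ?thesis using ep1 ep0 h0 False unfolding x'_def by (simp add: abs_le_iff max_def min_def)
        qed
        hence dx: "dist x x' \<le> sd * (h + ep)" unfolding sd_def dist_norm by (rule norm_le_sqrt_card)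
        have "dist x y \<le> dist x x' + dist x' y" by (rule dist_triangle)
        also have "\<dots> \<le> sd * (h + ep) + (h + ep/2)" using dx y(2) by simp
        also have "\<dots> \<le> (1 + sd) * h + e"
        proof -
          have "(2 * sd + 2) * ep \<le> e" using ep1(1) sd1 by (simp add: field_simps)
          moreover have "0 \<le> ep * sd" using sd1 ep0 by simp
          ultimately show ?thesis using ep0 by (simp add: algebra_simps)
        qed
        finally show "\<exists>y\<in>P. dist x y \<le> (1 + sd) * h + e" using yP by blast
      qed
    qed
    thus ?thesis using False by simp
  qed
  have qPpos: "sep_rad P > 0" using sep qLpos by simp
  define C where "C = (if h \<ge> 1/2 then 2 * sd else 1 + sd)"
  have C0: "0 \<le> C" unfolding C_def using sd1 by simp
  have covC: "cover_rad P \<le> C * h" using covb unfolding C_def by (auto simp: mult.assoc)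
  have "mesh_ratio P = cover_rad P / sep_rad P" unfolding mesh_ratio_def by simp
  also have "\<dots> \<le> C * h / sep_rad P" using covC qPpos by (simp add: divide_right_mono)
  also have "\<dots> \<le> C * h / lat_sep_rad L" using sep qLpos C0 h0
    by (simp add: frac_le)
  also have "\<dots> = C * lat_mesh_ratio L" unfolding lat_mesh_ratio_def h_def by simp
  finally have mesh: "mesh_ratio P \<le> C * lat_mesh_ratio L" .
  show ?thesis using sep covb mesh unfolding C_def sd_def h_def by (auto simp: mult.assoc)
qed

end
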